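(* Let $A$ be the $b\times v$ incidence matrix of a $(v,b,r,k,\lambda)$-BIBD with $k<v$, let $\theta\in(0,1)$, $\alpha_1=\theta/r$, $\alpha_2=(1-\theta)/(b-r)$, and $Q=\alpha_1A+\alpha_2(J_{b\times v}-A)$, and assume $Q$ has rank $v$. Let $\pi$ be the uniform distribution on the $v$ points, let $\rho=Q\pi$ be the induced distribution on the $b$ blocks, and let $D_\rho$ be the $b\times b$ diagonal matrix with $\rho_1,\dots,\rho_b$ on the diagonal. Then the estimator $$L=(Q^TD_\rho^{-1}Q)^{-1}Q^TD_\rho^{-1}$$ is equal to the Moore–Penrose inverse $(Q^TQ)^{-1}Q^T$ of $Q$.
   Context: A $(v,b,r,k,\lambda)$-BIBD is a set system with $v$ points and $b$ blocks, each block of size $k$, each point in exactly $r$ blocks, each pair of distinct points in exactly $\lambda$ blocks. $J_{b\times v}$ is the all-ones matrix. $Q$ is the transition probability matrix of the LDP protocol based on the BIBD. The estimator $(Q^TD_\rho^{-1}Q)^{-1}Q^TD_\rho^{-1}$ is the unbiased linear estimator (left inverse of $Q$) minimizing the risk $\mathsf{trace}(LD_\rho L^T)-\sum_j p_j^2$ among left inverses $L$ of $Q$. *)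

theory Defs
  imports "HOL-Analysis.Analysis"
begin

text \<open>A (v,b,r,k,lambda)-BIBD on the point set UNIV :: 'v set (v = CARD('v)),
  with blocks indexed by 'b (b = CARD('b), repeated blocks allowed):
  block i is the set B i of points.\<close>
definition is_bibd :: "('b::finite \<Rightarrow> 'v::finite set) \<Rightarrow> nat \<Rightarrow> nat \<Rightarrow> nat \<Rightarrow> bool" where
  "is_bibd B r k lam \<longleftrightarrow>
     (\<forall>i. card (B i) = k) \<and>
     (\<forall>x. card {i. x \<in> B i} = r) \<and>
     (\<forall>x y. x \<noteq> y \<longrightarrow> card {i. x \<in> B i \<and> y \<in> B i} = lam)"

definition incidence_matrix :: "('b::finite \<Rightarrow> 'v::finite set) \<Rightarrow> real^'v^'b" where
  "incidence_matrix B = (\<chi> i j. if j \<in> B i then 1 else 0)"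

definition ones_mat :: "real^'n^'m" where
  "ones_mat = (\<chi> i j. 1)"

definition diag_mat :: "real^'n \<Rightarrow> real^'n^'n" where
  "diag_mat d = (\<chi> i j. if i = j then d $ i else 0)"

end

theory Submission
  imports Defs
begin

lemma minv_unique:
  fixes M N :: "real^'n^'n"
  assumes "M ** N = mat 1" "N ** M = mat 1"
  shows "matrix_inv M = N"
proof -
  have ex: "\<exists>A'. M ** A' = mat 1 \<and> A' ** M = mat 1" using assms by blast
  define P where "P = matrix_inv M"
  have P: "M ** P = mat 1" "P ** M = mat 1"
    using someI_ex[OF ex] unfolding P_def matrix_inv_def by auto
  have "P = P ** (M ** N)" using assms by simp
  also have "\<dots> = (P ** M) ** N" by (simp add: matrix_mul_assoc)
  also have "\<dots> = N" using P by simp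
  finally show ?thesis unfolding P_def .
qed

lemma scal_mul:
  fixes X :: "real^'n^'m" and Y :: "real^'p^'n"
  shows "(a *\<^sub>R X) ** (b *\<^sub>R Y) = (a*b) *\<^sub>R (X ** Y)"
  by (simp add: matrix_scalar_ac scalar_matrix_assoc[symmetric])

theorem mainTheorem5:
  fixes B :: "'b::finite \<Rightarrow> 'v::finite set"
    and r k lam :: nat and \<theta> :: real
    and A Q :: "real^'v^'b" and \<pi> :: "real^'v" and \<rho> :: "real^'b"
  assumes bibd: "is_bibd B r k lam"
    and kv: "k < CARD('v)"
    and A_def: "A = incidence_matrix B"
    and theta: "0 < \<theta>" "\<theta> < 1"
    and Q_def: "Q = (\<theta> / real r) *\<^sub>R A
                  + ((1 - \<theta>) / (real CARD('b) - real r)) *\<^sub>R (ones_mat - A)"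
    and rankQ: "rank Q = CARD('v)"
    and pi_def: "\<pi> = (\<chi> j. 1 / real CARD('v))"
    and rho_def: "\<rho> = Q *v \<pi>"
  shows "matrix_inv (transpose Q ** matrix_inv (diag_mat \<rho>) ** Q)
           ** transpose Q ** matrix_inv (diag_mat \<rho>)
         = matrix_inv (transpose Q ** Q) ** transpose Q"
proof -
  define a1 where "a1 = \<theta> / real r"
  define a2 where "a2 = (1 - \<theta>) / (real CARD('b) - real r)"
  have cardB: "\<And>i. card (B i) = k" and cardr: "\<And>x. card {i. x \<in> B i} = r"
    using bibd unfolding is_bibd_def by auto
  have rle: "r \<le> CARD('b)" using cardr card_mono[of UNIV] by (metis finite top_greatest)
  have rlt: "r < CARD('b)"
  proof (rule ccontr)
    assume "\<not> r < CARD('b)"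
    then have "r = CARD('b)" using rle by simp
    then have "\<And>x. {i. x \<in> B i} = UNIV"
      using cardr by (metis card_subset_eq finite top_greatest)
    then have "B undefined = UNIV" by auto
    then show False using cardB[of undefined] kv by simp
  qed
  have a1: "a1 \<ge> 0" unfolding a1_def using theta by simp
  have a2: "a2 > 0" unfolding a2_def using theta rlt by simp
  have Qij: "\<And>i j. Q $ i $ j = (if j \<in> B i then a1 else a2)"
    unfolding Q_def A_def a1_def a2_def incidence_matrix_def ones_mat_def by simp
  define c where "c = (a1 * real k + a2 * (real CARD('v) - real k)) / real CARD('v)"
  have cpos: "c > 0" unfolding c_def using a1 a2 kv
    by (intro divide_pos_pos add_nonneg_pos) auto
  have rho: "\<And>i. \<rho> $ i = c"
  proof -
    fix i
    have "\<rho> $ i = (\<Sum>j\<in>UNIV. (if j \<in> B i then a1 else a2)) / real CARD('v)"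
      unfolding rho_def pi_def matrix_vector_mult_def Qij
      by (simp add: sum_divide_distrib)
    also have "(\<Sum>j\<in>UNIV. (if j \<in> B i then a1 else a2)) = a1 * real (card (B i)) + a2 * real (card (- B i))"
      by (simp add: sum.If_cases Int_def Compl_eq)
    also have "card (- B i) = CARD('v) - k" using cardB[of i] by (simp add: Compl_eq_Diff_UNIV card_Diff_subset)
    finally show "\<rho> $ i = c" unfolding c_def using cardB[of i] kv by (simp add: of_nat_diff)
  qed
  have D: "diag_mat \<rho> = c *\<^sub>R mat 1"
    unfolding diag_mat_def mat_def using rho by (simp add: vec_eq_iff)
  have Di: "matrix_inv (diag_mat \<rho>) = (1/c) *\<^sub>R mat 1"
    unfolding D using cpos by (intro minv_unique) (simp_all add: scal_mul)
  define M where "M = transpose Q ** Q"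
  have inj: "inj ((*v) Q)" using rankQ full_rank_injective by blast
  have "\<forall>x. M *v x = 0 \<longrightarrow> x = 0"
  proof (intro allI impI)
    fix x assume "M *v x = 0"
    then have "(Q *v x) v* Q = 0" unfolding M_def
      by (metis matrix_vector_mul_assoc transpose_matrix_vector)
    then have "inner (Q *v x) (Q *v x) = 0"
      by (metis dot_lmul_matrix inner_zero_left)
    then have "Q *v x = Q *v 0" by simp
    then show "x = 0" using inj by (meson injD)
  qed
  then obtain N where "N ** M = mat 1" using matrix_left_invertible_ker by blast
  then have NM: "N ** M = mat 1" "M ** N = mat 1" using matrix_left_right_inverse by blast+
  have Mi: "matrix_inv M = N" using minv_unique NM by blast
  have "transpose Q ** matrix_inv (diag_mat \<rho>) ** Q = (1/c) *\<^sub>R M"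
    unfolding Di M_def
    by (metis matrix_mul_rid matrix_scalar_ac scalar_matrix_assoc)
  moreover have "matrix_inv ((1/c) *\<^sub>R M) = c *\<^sub>R N"
    using cpos NM by (intro minv_unique) (simp_all add: scal_mul)
  ultimately have "matrix_inv (transpose Q ** matrix_inv (diag_mat \<rho>) ** Q)
           ** transpose Q ** matrix_inv (diag_mat \<rho>) = (c *\<^sub>R N) ** transpose Q ** ((1/c) *\<^sub>R mat 1)"
    using Di by simp
  also have "\<dots> = N ** transpose Q"
    using cpos by (metis scal_mul matrix_mul_rid scalar_matrix_assoc mult_1 nonzero_mult_div_cancel_left
        divide_self_if less_irrefl scaleR_one times_divide_eq_right mult.commute)
  finally show ?thesis using Mi unfolding M_def by simp
qed

end
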